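(* Let $A$ be a semicircular Klaus–Shaw potential. Then $\Phi(\mathrm is)>0$ for $0<s<A_{\max}$ and $\Phi(\mathrm iA_{\max})=0$. Moreover $\lambda\mapsto\Phi(\lambda)$ extends to an even analytic function at $\lambda=0$ with convergent series $\Phi(\lambda)=\sum_{k=0}^\infty\Phi_k\lambda^{2k}$ near $0$, where the coefficients $\Phi_k$ are real, and $\Phi_0>0$, $\Phi_1>0$.
   Context: Let $X_-<X_+$. A semicircular Klaus–Shaw potential is $A:\mathbb R\to[0,\infty)$ such that: $A$ has support $[X_-,X_+]$ and $A(x)=u(x)\sqrt{(X_+-x)(x-X_-)}$ there, where $u\ge c>0$ on $[X_-,X_+]$ and $u$ extends analytically to a complex neighborhood of $[X_-,X_+]$; $A\in L^1(\mathbb R)\cap C^2(\mathbb R)$ with a unique maximizer $x_0$; $A''(x_0)<0$. $A_{\max}:=A(x_0)$; for $0<s<A_{\max}$, $x_-(s)<x_+(s)$ are the solutions of $A(x)=s$. The phase integral is $\Phi(\mathrm is):=\int_{x_-(s)}^{x_+(s)}\sqrt{A(x)^2-s^2}\,dx$ for $0<s<A_{\max}$, viewed as a function of $\lambda=\mathrm is$ (with $\Phi(\mathrm iA_{\max})$ its limiting value). *)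

theory Defs
  imports "HOL-Analysis.Analysis"
begin

definition Amax :: "(real \<Rightarrow> real) \<Rightarrow> real" where
  "Amax A = Sup (range A)"

definition semicircular_KS :: "(real \<Rightarrow> real) \<Rightarrow> real \<Rightarrow> real \<Rightarrow> bool" where
  "semicircular_KS A Xm Xp \<longleftrightarrow>
     Xm < Xp \<and> (\<forall>x. 0 \<le> A x) \<and>
     closure {x. A x \<noteq> 0} = {Xm..Xp} \<and>
     (\<exists>u c. c > 0 \<and>
        (\<forall>x\<in>{Xm..Xp}. c \<le> u x \<and> A x = u x * sqrt ((Xp - x) * (x - Xm))) \<and>
        (\<exists>U g. open U \<and> complex_of_real ` {Xm..Xp} \<subseteq> U \<and> g holomorphic_on U \<and>
           (\<forall>x\<in>{Xm..Xp}. g (complex_of_real x) = complex_of_real (u x)))) \<and>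
     integrable lborel A \<and>
     continuous_on UNIV A \<and>
     (\<forall>x\<in>{Xm<..<Xp}. A differentiable (at x) \<and> deriv A differentiable (at x)) \<and>
     continuous_on {Xm<..<Xp} (deriv (deriv A)) \<and>
     (\<exists>x0. (\<forall>x. x \<noteq> x0 \<longrightarrow> A x < A x0) \<and> deriv (deriv A) x0 < 0) \<and>
     (\<forall>s. 0 < s \<and> s < Amax A \<longrightarrow> card {x. A x = s} = 2)"

definition xminus :: "(real \<Rightarrow> real) \<Rightarrow> real \<Rightarrow> real" where
  "xminus A s = Min {x. A x = s}"

definition xplus :: "(real \<Rightarrow> real) \<Rightarrow> real \<Rightarrow> real" where
  "xplus A s = Max {x. A x = s}"

text \<open>Phi A s stands for the phase integral at lambda = i s.\<close>
definition Phi :: "(real \<Rightarrow> real) \<Rightarrow> real \<Rightarrow> real" where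
  "Phi A s = integral {xminus A s..xplus A s} (\<lambda>x. sqrt ((A x)\<^sup>2 - s\<^sup>2))"

end

theory Submission
  imports Defs "HOL-Complex_Analysis.Complex_Analysis"
begin


lemma local_inverse:
  fixes f :: "complex \<Rightarrow> complex"
  assumes holf: "f holomorphic_on S" and S: "open S" "w \<in> S" and d: "deriv f w \<noteq> 0"
  obtains r e \<phi> where "r > 0" "e > 0" "ball w r \<subseteq> S" "inj_on f (ball w r)"
    "\<phi> holomorphic_on ball (f w) e"
    "\<And>y. y \<in> ball (f w) e \<Longrightarrow> \<phi> y \<in> ball w r \<and> f (\<phi> y) = y"
proof -
  obtain r where r: "r > 0" "ball w r \<subseteq> S" "inj_on f (ball w r)"
    using has_complex_derivative_locally_injective[OF holf S(2) S(1) d] by blast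
  have hb: "f holomorphic_on ball w r" using holf r(2) holomorphic_on_subset by blast
  obtain g where g: "g holomorphic_on (f ` ball w r)" "\<And>z. z \<in> ball w r \<Longrightarrow> g (f z) = z"
    using holomorphic_has_inverse[OF hb open_ball r(3)] by metis
  have op: "open (f ` ball w r)" using open_mapping_thm3[OF hb open_ball r(3)] .
  have "f w \<in> f ` ball w r" using r(1) by auto
  then obtain e where e: "e > 0" "ball (f w) e \<subseteq> f ` ball w r"
    using op open_contains_ball by blast
  show ?thesis
  proof (rule that[OF r(1) e(1) r(2) r(3)])
    show "g holomorphic_on ball (f w) e" using g(1) e(2) holomorphic_on_subset by blast
    fix y assume "y \<in> ball (f w) e"
    then obtain z where "z \<in> ball w r" "y = f z" using e(2) by blast
    then show "g y \<in> ball w r \<and> f (g y) = y" using g(2) by auto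
  qed
qed



lemma seg_in_ball:
  fixes z :: complex and H e \<sigma> :: real
  assumes "norm z < e" "0 < H" "H < e" "0 \<le> \<sigma>" "\<sigma> \<le> 1"
  shows "z + (of_real H - z) * of_real \<sigma> \<in> ball 0 e"
proof -
  have eq: "z + (of_real H - z) * of_real \<sigma> = z * of_real (1 - \<sigma>) + of_real (H * \<sigma>)"
    by (simp add: algebra_simps)
  have "norm (z * of_real (1 - \<sigma>) + of_real (H * \<sigma>)) \<le> norm z * (1 - \<sigma>) + H * \<sigma>"
    using assms by (metis (no_types, opaque_lifting) norm_triangle_le norm_mult norm_of_real abs_of_nonneg
        diff_ge_0_iff_ge mult_nonneg_nonneg less_imp_le order_refl)
  also have "\<dots> < e"
  proof (cases "\<sigma> = 0")
    case True then show ?thesis using assms by simp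
  next
    case False
    then have "H * \<sigma> < e * \<sigma>" using assms by simp
    moreover have "norm z * (1 - \<sigma>) \<le> e * (1 - \<sigma>)" using assms by (intro mult_right_mono) auto
    ultimately show ?thesis by (simp add: algebra_simps)
  qed
  finally show ?thesis using eq by simp
qed

lemma endpoint_holo:
  fixes \<phi> :: "complex \<Rightarrow> complex"
  assumes holphi: "\<phi> holomorphic_on ball 0 e" and H: "0 < H" "H < e"
  shows "(\<lambda>z. integral {0..1} (\<lambda>\<sigma>::real. of_real (sqrt \<sigma>) * deriv \<phi> (z + (of_real H - z) * of_real \<sigma>)))
           holomorphic_on ball 0 e"
proof -
  define \<psi> where "\<psi> = deriv \<phi>"
  have hpsi: "\<psi> holomorphic_on ball 0 e" unfolding \<psi>_def using holphi holomorphic_deriv by blast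
  have hpsi': "deriv \<psi> holomorphic_on ball 0 e" using hpsi holomorphic_deriv by blast
  have cpsi: "continuous_on (ball 0 e) \<psi>" using hpsi holomorphic_on_imp_continuous_on by blast
  have cpsi': "continuous_on (ball 0 e) (deriv \<psi>)" using hpsi' holomorphic_on_imp_continuous_on by blast
  define fx where "fx = (\<lambda>z (\<sigma>::real). of_real (sqrt \<sigma>) * (deriv \<psi> (z + (of_real H - z) * of_real \<sigma>) * (1 - of_real \<sigma>)))"
  show ?thesis unfolding \<psi>_def[symmetric]
  proof (rule holomorphic_onI)
    fix z0 :: complex assume z0: "z0 \<in> ball 0 e"
    have "((\<lambda>z. integral (cbox 0 1) (\<lambda>\<sigma>::real. of_real (sqrt \<sigma>) * \<psi> (z + (of_real H - z) * of_real \<sigma>)))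
           has_field_derivative integral (cbox 0 1) (fx z0)) (at z0 within ball 0 e)"
    proof (rule leibniz_rule_field_derivative)
      fix z :: complex and \<sigma> :: real assume z: "z \<in> ball 0 e" and s: "\<sigma> \<in> cbox 0 1"
      have w: "z + (of_real H - z) * of_real \<sigma> \<in> ball 0 e"
        using z s H by (intro seg_in_ball) auto
      have d: "(\<psi> has_field_derivative deriv \<psi> (z + (of_real H - z) * of_real \<sigma>)) (at (z + (of_real H - z) * of_real \<sigma>))"
        using hpsi w holomorphic_derivI open_ball by blast
      have "((\<lambda>z. z + (of_real H - z) * of_real \<sigma>) has_field_derivative (1 - of_real \<sigma>)) (at z)"
        by (auto intro!: derivative_eq_intros)
      from DERIV_chain2[OF d this]
      have "((\<lambda>z. \<psi> (z + (of_real H - z) * of_real \<sigma>)) has_field_derivative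
              deriv \<psi> (z + (of_real H - z) * of_real \<sigma>) * (1 - of_real \<sigma>)) (at z)" .
      then have "((\<lambda>z. of_real (sqrt \<sigma>) * \<psi> (z + (of_real H - z) * of_real \<sigma>)) has_field_derivative fx z \<sigma>) (at z)"
        unfolding fx_def by (rule DERIV_cmult)
      then show "((\<lambda>z. of_real (sqrt \<sigma>) * \<psi> (z + (of_real H - z) * of_real \<sigma>)) has_field_derivative fx z \<sigma>) (at z within ball 0 e)"
        by (rule has_field_derivative_at_within)
    next
      fix z :: complex assume z: "z \<in> ball 0 e"
      have "continuous_on {0..1} (\<lambda>\<sigma>::real. of_real (sqrt \<sigma>) * \<psi> (z + (of_real H - z) * of_real \<sigma>))"
      proof (intro continuous_intros)
        show "continuous_on {0..1} (\<lambda>\<sigma>::real. \<psi> (z + (of_real H - z) * of_real \<sigma>))"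
          by (rule continuous_on_compose2[OF cpsi]) (use z H in \<open>auto intro!: continuous_intros seg_in_ball\<close>)
      qed
      then show "(\<lambda>\<sigma>::real. of_real (sqrt \<sigma>) * \<psi> (z + (of_real H - z) * of_real \<sigma>)) integrable_on cbox 0 1"
        by (simp add: integrable_continuous_real)
    next
      show "continuous_on (ball 0 e \<times> cbox 0 1) (\<lambda>(x, t). fx x t)"
        unfolding fx_def split_beta
      proof (intro continuous_intros)
        show "continuous_on (ball 0 e \<times> cbox 0 1) (\<lambda>x. deriv \<psi> (fst x + (of_real H - fst x) * of_real (snd x)))"
          by (rule continuous_on_compose2[OF cpsi']) (auto intro!: continuous_intros seg_in_ball simp: H)
      qed
    qed (use z0 in auto)
    then show "(\<lambda>z. integral {0..1} (\<lambda>\<sigma>::real. of_real (sqrt \<sigma>) * \<psi> (z + (of_real H - z) * of_real \<sigma>)))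
       field_differentiable at z0 within ball 0 e"
      unfolding field_differentiable_def by (auto simp: cbox_interval)
  qed
qed



lemma endpoint_subst:
  fixes \<phi> :: "complex \<Rightarrow> complex" and A :: "real \<Rightarrow> real"
  assumes holphi: "\<phi> holomorphic_on ball 0 e" and tH: "0 < t" "t < H" "H < e"
    and idA: "\<And>y. t \<le> y \<Longrightarrow> y \<le> H \<Longrightarrow> (A (Re (\<phi> (of_real y))))\<^sup>2 = y"
    and contA: "continuous_on UNIV A"
  shows "integral {Re (\<phi> (of_real t))..Re (\<phi> (of_real H))} (\<lambda>x. sqrt ((A x)\<^sup>2 - t))
       - integral {Re (\<phi> (of_real H))..Re (\<phi> (of_real t))} (\<lambda>x. sqrt ((A x)\<^sup>2 - t))
     = (H - t) * sqrt (H - t) * integral {0..1} (\<lambda>\<sigma>. sqrt \<sigma> *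
          Re (deriv \<phi> (of_real t + (of_real H - of_real t) * of_real \<sigma>)))"
proof -
  define f where "f = (\<lambda>x. sqrt ((A x)\<^sup>2 - t))"
  define k where "k = (\<lambda>y::real. Re (\<phi> (of_real y)))"
  define g where "g = (\<lambda>\<sigma>::real. k (t + (H - t) * \<sigma>))"
  define g' where "g' = (\<lambda>\<sigma>::real. Re (deriv \<phi> (of_real (t + (H - t) * \<sigma>))) * (H - t))"
  have inb: "of_real (t + (H - t) * \<sigma>) \<in> ball (0::complex) e" if "0 \<le> \<sigma>" "\<sigma> \<le> 1" for \<sigma>
  proof -
    have "t + (H - t) * \<sigma> \<le> t + (H - t) * 1" using that tH by (intro add_left_mono mult_left_mono) auto
    moreover have "0 \<le> t + (H - t) * \<sigma>" using that tH by simp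
    ultimately have "norm (complex_of_real (t + (H - t) * \<sigma>)) < e" using tH
      by (simp only: norm_of_real) simp
    then show ?thesis by (simp only: mem_ball_0)
  qed
  have kd: "(k has_field_derivative Re (deriv \<phi> (of_real y))) (at y)" if "(of_real y :: complex) \<in> ball 0 e" for y
  proof -
    have "(\<phi> has_field_derivative deriv \<phi> (of_real y)) (at (of_real y))"
      using holphi that holomorphic_derivI open_ball by blast
    from has_vector_derivative_real_field[OF this]
    have "((\<lambda>x. \<phi> (of_real x)) has_vector_derivative deriv \<phi> (of_real y)) (at y)" .
    then show ?thesis unfolding k_def by (rule has_field_derivative_Re)
  qed
  have gd: "(g has_field_derivative g' \<sigma>) (at \<sigma> within {0..1})" if "\<sigma> \<in> {0..1}" for \<sigma>
  proof -
    have "((\<lambda>\<sigma>. t + (H - t) * \<sigma>) has_field_derivative (H - t)) (at \<sigma>)"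
      by (auto intro!: derivative_eq_intros)
    from DERIV_chain2[OF kd[OF inb] this] that
    show ?thesis unfolding g_def g'_def by (auto intro: has_field_derivative_at_within)
  qed
  have contg: "continuous_on {0..1} g"
    by (rule continuous_on_vector_derivative[of _ _ g']) (use gd in \<open>auto simp: has_real_derivative_iff_has_vector_derivative\<close>)
  have "bounded (g ` {0..1})" using compact_continuous_image[OF contg] compact_imp_bounded by blast
  then obtain a where a: "g ` {0..1} \<subseteq> cbox (-a) a" using bounded_subset_cbox_symmetric by blast
  have contf: "continuous_on {-a..a} f" unfolding f_def
    by (intro continuous_intros continuous_on_subset[OF contA]) auto
  have S: "((\<lambda>\<sigma>. g' \<sigma> *\<^sub>R f (g \<sigma>)) has_integral
      (integral {g 0..g 1} f - integral {g 1..g 0} f)) {0..1}"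
    by (rule has_integral_substitution_general[of "{}" 0 1 g "-a" a f g'])
       (use a contf contg gd in \<open>auto simp: cbox_interval\<close>)
  have eqi: "g' \<sigma> *\<^sub>R f (g \<sigma>) = (H - t) * sqrt (H - t) * (sqrt \<sigma> *
          Re (deriv \<phi> (of_real t + (of_real H - of_real t) * of_real \<sigma>)))" if "\<sigma> \<in> {0..1}" for \<sigma>
  proof -
    have "(A (g \<sigma>))\<^sup>2 = t + (H - t) * \<sigma>"
      unfolding g_def k_def
    proof (rule idA)
      show "t \<le> t + (H - t) * \<sigma>" using that tH by simp
      have "(H - t) * \<sigma> \<le> (H - t) * 1" using that tH by (intro mult_left_mono) auto
      then show "t + (H - t) * \<sigma> \<le> H" by simp
    qed
    then have "f (g \<sigma>) = sqrt (H - t) * sqrt \<sigma>" unfolding f_def by (simp add: real_sqrt_mult)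
    moreover have "complex_of_real (t + (H - t) * \<sigma>) = of_real t + (of_real H - of_real t) * of_real \<sigma>"
      by simp
    ultimately show ?thesis unfolding g'_def by (simp add: algebra_simps)
  qed
  have S2: "((\<lambda>\<sigma>. (H - t) * sqrt (H - t) * (sqrt \<sigma> *
          Re (deriv \<phi> (of_real t + (of_real H - of_real t) * of_real \<sigma>)))) has_integral
      (integral {g 0..g 1} f - integral {g 1..g 0} f)) {0..1}"
    using S by (subst has_integral_cong[symmetric, of "{0..1}"]) (use eqi in auto)
  have "(\<lambda>\<sigma>. sqrt \<sigma> * Re (deriv \<phi> (of_real t + (of_real H - of_real t) * of_real \<sigma>))) integrable_on {0..1}"
  proof -
    have "(H - t) * sqrt (H - t) \<noteq> 0" using tH by simp
    moreover have "(\<lambda>\<sigma>. (H - t) * sqrt (H - t) * (sqrt \<sigma> *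
          Re (deriv \<phi> (of_real t + (of_real H - of_real t) * of_real \<sigma>)))) integrable_on {0..1}"
      using S2 by (auto intro: has_integral_integrable)
    ultimately show ?thesis using integrable_on_cmult_iff by blast
  qed
  then have "integral {0..1} (\<lambda>\<sigma>. (H - t) * sqrt (H - t) * (sqrt \<sigma> *
          Re (deriv \<phi> (of_real t + (of_real H - of_real t) * of_real \<sigma>)))) =
        (H - t) * sqrt (H - t) * integral {0..1} (\<lambda>\<sigma>. sqrt \<sigma> *
          Re (deriv \<phi> (of_real t + (of_real H - of_real t) * of_real \<sigma>)))"
    by simp
  moreover have "g 0 = Re (\<phi> (of_real t))" "g 1 = Re (\<phi> (of_real H))" unfolding g_def k_def by auto
  ultimately show ?thesis using integral_unique[OF S2] unfolding f_def by simp
qed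



locale ks =
  fixes A :: "real \<Rightarrow> real" and Xm Xp x0 :: real
  assumes contA: "continuous_on UNIV A"
    and out: "\<And>x. x \<notin> {Xm<..<Xp} \<Longrightarrow> A x = 0"
    and pos: "\<And>x. x \<in> {Xm<..<Xp} \<Longrightarrow> A x > 0"
    and x0: "x0 \<in> {Xm<..<Xp}"
    and mx: "\<And>x. x \<noteq> x0 \<Longrightarrow> A x < A x0"
    and crd: "\<And>s. 0 < s \<Longrightarrow> s < A x0 \<Longrightarrow> card {x. A x = s} = 2"
begin

lemma ivt: assumes "a \<le> b" "min (A a) (A b) \<le> s" "s \<le> max (A a) (A b)"
  shows "\<exists>x. a \<le> x \<and> x \<le> b \<and> A x = s"
proof -
  have c: "continuous_on {a..b} A" using contA continuous_on_subset by blast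
  show ?thesis
  proof (cases "A a \<le> A b")
    case True then show ?thesis using IVT'[of A a s b] assms c by auto
  next
    case False then show ?thesis using IVT2'[of A b s a] assms c by auto
  qed
qed

lemma Amax_eq: "Amax A = A x0"
  unfolding Amax_def
proof (rule cSup_eq_maximum)
  show "A x0 \<in> range A" by simp
  fix y assume "y \<in> range A" then show "y \<le> A x0" using mx by (cases "y = A x0") (auto, metis less_imp_le mx)
qed

lemma lev:
  assumes s: "0 < s" "s < A x0"
  shows "xminus A s \<in> {Xm<..<x0}" "xplus A s \<in> {x0<..<Xp}"
    "A (xminus A s) = s" "A (xplus A s) = s"
    "\<And>x. xminus A s < x \<Longrightarrow> x < xplus A s \<Longrightarrow> s < A x"
    "\<And>x. x < xminus A s \<or> xplus A s < x \<Longrightarrow> A x < s"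
proof -
  have AXm: "A Xm = 0" "A Xp = 0" using out by auto
  obtain p where p: "Xm \<le> p" "p \<le> x0" "A p = s" using ivt[of Xm x0 s] x0 s AXm by auto
  obtain q where q: "x0 \<le> q" "q \<le> Xp" "A q = s" using ivt[of x0 Xp s] x0 s AXm by auto
  have p2: "p \<in> {Xm<..<x0}" using p s AXm by (cases "p = Xm"; cases "p = x0") auto
  have q2: "q \<in> {x0<..<Xp}" using q s AXm by (cases "q = Xp"; cases "q = x0") auto
  have "card {x. A x = s} = 2" using crd s by blast
  then obtain u v where uv: "{x. A x = s} = {u, v}" "u \<noteq> v" by (auto simp: card_2_iff)
  have S: "{x. A x = s} = {p, q}"
  proof -
    have "p \<in> {u,v}" "q \<in> {u,v}" using p q uv by blast+
    moreover have "p \<noteq> q" using p2 q2 by auto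
    ultimately have "{u,v} = {p,q}" by auto
    then show ?thesis using uv by simp
  qed
  have fin: "finite {x. A x = s}" using S by simp
  have xm: "xminus A s = p" unfolding xminus_def S using p2 q2 by simp
  have xp: "xplus A s = q" unfolding xplus_def S using p2 q2 by simp
  show "xminus A s \<in> {Xm<..<x0}" "xplus A s \<in> {x0<..<Xp}" "A (xminus A s) = s" "A (xplus A s) = s"
    using xm xp p2 q2 p q by auto
  show "s < A x" if "xminus A s < x" "x < xplus A s" for x
  proof (rule ccontr)
    assume "\<not> s < A x"
    then have le: "A x \<le> s" by simp
    consider "x \<le> x0" | "x0 \<le> x" by linarith
    then show False
    proof cases
      case 1
      then obtain z where "x \<le> z" "z \<le> x0" "A z = s" using ivt[of x x0 s] le s by auto
      then have "z \<in> {p,q}" using S by blast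
      then show False using \<open>x \<le> z\<close> \<open>z \<le> x0\<close> that xm q2 by auto
    next
      case 2
      then obtain z where "x0 \<le> z" "z \<le> x" "A z = s" using ivt[of x0 x s] le s by auto
      then have "z \<in> {p,q}" using S by blast
      then show False using \<open>x0 \<le> z\<close> \<open>z \<le> x\<close> that xp p2 by auto
    qed
  qed
  show "A x < s" if "x < xminus A s \<or> xplus A s < x" for x
  proof (rule ccontr)
    assume "\<not> A x < s"
    then have le: "s \<le> A x" by simp
    then have "x \<in> {Xm<..<Xp}" using out s by force
    from that show False
    proof
      assume "x < xminus A s"
      then obtain z where "Xm \<le> z" "z \<le> x" "A z = s" using ivt[of Xm x s] le s AXm \<open>x \<in> _\<close> by auto
      then have "z \<in> {p,q}" using S by blast
      then show False using \<open>z \<le> x\<close> \<open>x < xminus A s\<close> xm p2 q2 by auto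
    next
      assume "xplus A s < x"
      then obtain z where "x \<le> z" "z \<le> Xp" "A z = s" using ivt[of x Xp s] le s AXm \<open>x \<in> _\<close> by auto
      then have "z \<in> {p,q}" using S by blast
      then show False using \<open>x \<le> z\<close> \<open>xplus A s < x\<close> xp p2 q2 by auto
    qed
  qed
qed

lemma lev_mono:
  assumes "0 < s" "s < s'" "s' < A x0"
  shows "xminus A s < xminus A s'" "xplus A s' < xplus A s"
proof -
  have s': "0 < s'" using assms by simp
  have "\<not> (xminus A s' < xminus A s \<or> xplus A s < xminus A s')"
    using lev(6)[of s "xminus A s'"] lev(3)[OF s' assms(3)] assms by auto
  moreover have "xminus A s' \<noteq> xminus A s" using lev(3)[OF s' assms(3)] lev(3)[of s] assms by auto
  ultimately show "xminus A s < xminus A s'" by auto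
  have "\<not> (xplus A s' < xminus A s \<or> xplus A s < xplus A s')"
    using lev(6)[of s "xplus A s'"] lev(4)[OF s' assms(3)] assms by auto
  moreover have "xplus A s' \<noteq> xplus A s" using lev(4)[OF s' assms(3)] lev(4)[of s] assms by auto
  ultimately show "xplus A s' < xplus A s" by auto
qed

lemma lev_ge:
  assumes "0 < s" "s < A x0" "xminus A s \<le> x" "x \<le> xplus A s"
  shows "s \<le> A x"
  using lev(3,4)[of s] lev(5)[of s x] assms by (cases "x = xminus A s"; cases "x = xplus A s") auto

lemma Phi_pos: assumes "0 < s" "s < A x0" shows "Phi A s > 0"
proof -
  define s' where "s' = (s + A x0) / 2"
  have s': "s < s'" "s' < A x0" using assms unfolding s'_def by auto
  define f where "f = (\<lambda>x. sqrt ((A x)\<^sup>2 - s\<^sup>2))"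
  have cf: "continuous_on S f" for S unfolding f_def
    by (intro continuous_intros continuous_on_subset[OF contA]) auto
  have sub: "{xminus A s'..xplus A s'} \<subseteq> {xminus A s..xplus A s}"
    using lev_mono[of s s'] assms s' by auto
  have lt: "xminus A s' < xplus A s'" using lev(1,2)[of s'] assms s' by auto
  have "(xplus A s' - xminus A s') * sqrt (s'\<^sup>2 - s\<^sup>2) \<le> integral {xminus A s'..xplus A s'} f"
  proof -
    have "integral {xminus A s'..xplus A s'} (\<lambda>x. sqrt (s'\<^sup>2 - s\<^sup>2)) \<le> integral {xminus A s'..xplus A s'} f"
    proof (rule integral_le)
      show "f integrable_on {xminus A s'..xplus A s'}" using cf integrable_continuous_interval by blast
      fix x assume "x \<in> {xminus A s'..xplus A s'}"
      then have "s' \<le> A x" using lev_ge[of s' x] assms s' by auto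
      then have "s'\<^sup>2 \<le> (A x)\<^sup>2" using assms s' by (intro power_mono) auto
      then show "sqrt (s'\<^sup>2 - s\<^sup>2) \<le> f x" unfolding f_def by simp
    qed auto
    then show ?thesis using lt by simp
  qed
  also have "\<dots> \<le> integral {xminus A s..xplus A s} f"
  proof (rule integral_subset_le[OF sub])
    show "f integrable_on {xminus A s'..xplus A s'}" "f integrable_on {xminus A s..xplus A s}"
      using cf integrable_continuous_interval by blast+
    show "\<forall>x\<in>{xminus A s..xplus A s}. 0 \<le> f x"
    proof
      fix x assume "x \<in> {xminus A s..xplus A s}"
      then have "s \<le> A x" using lev_ge[of s x] assms by auto
      then have "s\<^sup>2 \<le> (A x)\<^sup>2" using assms by (intro power_mono) auto
      then show "0 \<le> f x" unfolding f_def by simp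
    qed
  qed
  finally have "(xplus A s' - xminus A s') * sqrt (s'\<^sup>2 - s\<^sup>2) \<le> Phi A s" unfolding Phi_def f_def .
  moreover have "0 < (xplus A s' - xminus A s') * sqrt (s'\<^sup>2 - s\<^sup>2)"
    using lt s' assms by (auto intro!: mult_pos_pos power_strict_mono)
  ultimately show ?thesis by linarith
qed

lemma Phi_nonneg: assumes "0 < s" "s < A x0" shows "0 \<le> Phi A s"
  using Phi_pos[OF assms] by simp

lemma Phi_le: assumes "0 < s" "s < A x0" shows "Phi A s \<le> (Xp - Xm) * sqrt ((A x0)\<^sup>2 - s\<^sup>2)"
proof -
  have "Phi A s \<le> integral {xminus A s..xplus A s} (\<lambda>x. sqrt ((A x0)\<^sup>2 - s\<^sup>2))"
    unfolding Phi_def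
  proof (rule integral_le)
    show "(\<lambda>x. sqrt ((A x)\<^sup>2 - s\<^sup>2)) integrable_on {xminus A s..xplus A s}"
      by (intro integrable_continuous_interval continuous_intros continuous_on_subset[OF contA]) auto
    fix x assume "x \<in> {xminus A s..xplus A s}"
    then have "s \<le> A x" using lev_ge[of s x] assms by auto
    moreover have "A x \<le> A x0" using mx[of x] by (cases "x = x0") auto
    ultimately have "(A x)\<^sup>2 \<le> (A x0)\<^sup>2" using assms by (intro power_mono) auto
    then show "sqrt ((A x)\<^sup>2 - s\<^sup>2) \<le> sqrt ((A x0)\<^sup>2 - s\<^sup>2)" by simp
  qed auto
  also have "\<dots> = (xplus A s - xminus A s) * sqrt ((A x0)\<^sup>2 - s\<^sup>2)"
  proof -
    have "s\<^sup>2 \<le> (A x0)\<^sup>2" using assms by (intro power_mono) auto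
    then show ?thesis using lev(1,2)[OF assms] by simp
  qed
  also have "\<dots> \<le> (Xp - Xm) * sqrt ((A x0)\<^sup>2 - s\<^sup>2)"
  proof -
    have "s\<^sup>2 \<le> (A x0)\<^sup>2" using assms by (intro power_mono) auto
    then show ?thesis using lev(1,2)[OF assms] by (intro mult_right_mono) auto
  qed
  finally show ?thesis .
qed

lemma Phi_lim: "(Phi A \<longlongrightarrow> 0) (at_left (Amax A))"
proof -
  have ev: "eventually (\<lambda>s. 0 < s \<and> s < A x0) (at_left (A x0))"
  proof -
    have "0 < A x0" using pos x0 by blast
    then show ?thesis using eventually_at_left_real[of 0 "A x0"] by (auto elim: eventually_mono)
  qed
  have "((\<lambda>s. (Xp - Xm) * sqrt ((A x0)\<^sup>2 - s\<^sup>2)) \<longlongrightarrow> (Xp - Xm) * sqrt ((A x0)\<^sup>2 - (A x0)\<^sup>2)) (at_left (A x0))"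
    by (intro tendsto_intros tendsto_ident_at)
  then have l: "((\<lambda>s. (Xp - Xm) * sqrt ((A x0)\<^sup>2 - s\<^sup>2)) \<longlongrightarrow> 0) (at_left (A x0))" by simp
  show ?thesis unfolding Amax_eq
    by (rule tendsto_sandwich[OF _ _ tendsto_const l]) (use ev Phi_nonneg Phi_le in \<open>auto elim: eventually_mono\<close>)
qed

lemma Phi_decr:
  assumes "0 < s'" "s' < s" "s < s0" "s0 < A x0"
  shows "Phi A s \<le> Phi A s' - (s\<^sup>2 - s'\<^sup>2) * ((xplus A s0 - xminus A s0) / (2 * A x0))"
proof -
  have sA: "s < A x0" "s' < A x0" "0 < s" using assms by auto
  have M: "0 < A x0" using pos x0 by blast
  define k where "k = (s\<^sup>2 - s'\<^sup>2) / (2 * A x0)"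
  have k0: "0 \<le> k" unfolding k_def using assms M by (auto intro!: divide_nonneg_pos power_mono)
  have cont: "continuous_on S (\<lambda>x. sqrt ((A x)\<^sup>2 - c))" for S c
    by (intro continuous_intros continuous_on_subset[OF contA]) auto
  have int: "(\<lambda>x. sqrt ((A x)\<^sup>2 - c)) integrable_on {a..b}" for a b c
    by (intro integrable_continuous_interval cont)
  have pw: "sqrt ((A x)\<^sup>2 - s\<^sup>2) \<le> sqrt ((A x)\<^sup>2 - s'\<^sup>2) - k" if x: "x \<in> {xminus A s..xplus A s}" for x
  proof -
    have sx: "s \<le> A x" using lev_ge[of s x] sA x by auto
    have Ax: "A x \<le> A x0" using mx[of x] by (cases "x = x0") auto
    define a where "a = (A x)\<^sup>2 - s'\<^sup>2"
    define b where "b = (A x)\<^sup>2 - s\<^sup>2"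
    have b0: "0 \<le> b" unfolding b_def using sx assms by (simp add: power_mono)
    have ab: "a - b = s\<^sup>2 - s'\<^sup>2" unfolding a_def b_def by simp
    have "s'\<^sup>2 < s\<^sup>2" using assms by (simp add: power_strict_mono)
    then have ab2: "b < a" using ab by simp
    have a0: "0 \<le> a" using ab2 b0 by simp
    have sa: "sqrt a \<le> A x0"
    proof -
      have "a \<le> (A x0)\<^sup>2" unfolding a_def using Ax assms pos out
        by (smt (verit) power_mono zero_le_power2 sx)
      then have "sqrt a \<le> sqrt ((A x0)\<^sup>2)" by (rule real_sqrt_le_mono)
      then show ?thesis using M by simp
    qed
    have sb: "sqrt b \<le> sqrt a" using ab2 by simp
    have prod: "(sqrt a - sqrt b) * (sqrt a + sqrt b) = a - b"
      using a0 b0 by (simp add: algebra_simps)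
    have "a - b \<le> (sqrt a - sqrt b) * (2 * A x0)"
    proof -
      have "(sqrt a - sqrt b) * (sqrt a + sqrt b) \<le> (sqrt a - sqrt b) * (2 * A x0)"
        using sb sa by (intro mult_left_mono) linarith+
      then show ?thesis using prod by simp
    qed
    then have "k \<le> sqrt a - sqrt b" unfolding k_def using M ab by (simp add: divide_le_eq mult.commute)
    then show ?thesis unfolding a_def b_def by simp
  qed
  have "Phi A s \<le> integral {xminus A s..xplus A s} (\<lambda>x. sqrt ((A x)\<^sup>2 - s'\<^sup>2) - k)"
    unfolding Phi_def by (rule integral_le) (use pw int in \<open>auto intro!: integrable_diff\<close>)
  also have "\<dots> = integral {xminus A s..xplus A s} (\<lambda>x. sqrt ((A x)\<^sup>2 - s'\<^sup>2)) - k * (xplus A s - xminus A s)"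
    using int lev(1,2)[of s] sA by (subst integral_diff) auto
  also have "\<dots> \<le> Phi A s' - k * (xplus A s0 - xminus A s0)"
  proof -
    have sub: "{xminus A s..xplus A s} \<subseteq> {xminus A s'..xplus A s'}"
      using lev_mono[of s' s] assms by auto
    have "integral {xminus A s..xplus A s} (\<lambda>x. sqrt ((A x)\<^sup>2 - s'\<^sup>2)) \<le> Phi A s'"
      unfolding Phi_def
    proof (rule integral_subset_le[OF sub int int])
      show "\<forall>x\<in>{xminus A s'..xplus A s'}. 0 \<le> sqrt ((A x)\<^sup>2 - s'\<^sup>2)"
      proof
        fix x assume "x \<in> {xminus A s'..xplus A s'}"
        then have "s' \<le> A x" using lev_ge[of s' x] sA assms by auto
        then show "0 \<le> sqrt ((A x)\<^sup>2 - s'\<^sup>2)" using assms by (simp add: power_mono)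
      qed
    qed
    moreover have "xplus A s0 - xminus A s0 \<le> xplus A s - xminus A s"
      using lev_mono[of s s0] assms by auto
    ultimately show ?thesis using k0 by (smt (verit) mult_left_mono)
  qed
  finally show ?thesis unfolding k_def by (simp add: algebra_simps)
qed

end



lemma Re_integral:
  fixes f :: "real \<Rightarrow> complex"
  assumes "f integrable_on S"
  shows "Re (integral S f) = integral S (\<lambda>x. Re (f x))"
  using integral_linear[OF assms bounded_linear_Re] by (simp add: o_def)

lemma middle_holo:
  fixes B :: "real \<Rightarrow> real"
  assumes contB: "continuous_on {a..b} B" and Bd: "\<And>x. x \<in> {a..b} \<Longrightarrow> d \<le> B x"
  shows "(\<lambda>z. integral {a..b} (\<lambda>x. csqrt (of_real (B x) - z))) holomorphic_on ball 0 d"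
proof -
  have notnp: "of_real (B x) - z \<notin> \<real>\<^sub>\<le>\<^sub>0" if "x \<in> {a..b}" "z \<in> ball 0 d" for x and z :: complex
  proof -
    have "Re z \<le> norm z" by (rule complex_Re_le_cmod)
    then have "Re z < B x" using that Bd[of x] by auto
    then show ?thesis by (auto simp: complex_nonpos_Reals_iff)
  qed
  define fx where "fx = (\<lambda>z x. inverse (2 * csqrt (of_real (B x) - z)) * (- 1 :: complex))"
  show ?thesis
  proof (rule holomorphic_onI)
    fix z0 :: complex assume z0: "z0 \<in> ball 0 d"
    have "((\<lambda>z. integral (cbox a b) (\<lambda>x. csqrt (of_real (B x) - z)))
           has_field_derivative integral (cbox a b) (fx z0)) (at z0 within ball 0 d)"
    proof (rule leibniz_rule_field_derivative)
      fix z :: complex and x :: real assume z: "z \<in> ball 0 d" and x: "x \<in> cbox a b"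
      have d: "(csqrt has_field_derivative inverse (2 * csqrt (of_real (B x) - z))) (at (of_real (B x) - z))"
        using has_field_derivative_csqrt notnp x z by (auto simp: cbox_interval)
      have "((\<lambda>z. of_real (B x) - z) has_field_derivative (- 1)) (at z)"
        by (auto intro!: derivative_eq_intros)
      from DERIV_chain2[OF d this]
      show "((\<lambda>z. csqrt (of_real (B x) - z)) has_field_derivative fx z x) (at z within ball 0 d)"
        unfolding fx_def by (rule has_field_derivative_at_within)
    next
      fix z :: complex assume z: "z \<in> ball 0 d"
      have "continuous_on {a..b} (\<lambda>x. csqrt (of_real (B x) - z))"
        by (rule continuous_on_compose2[OF continuous_on_csqrt])
          (use notnp z in \<open>auto intro!: continuous_intros contB\<close>)
      then show "(\<lambda>x. csqrt (of_real (B x) - z)) integrable_on cbox a b"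
        by (simp add: integrable_continuous_real)
    next
      have c1: "continuous_on (ball 0 d \<times> cbox a b) (\<lambda>p. csqrt (of_real (B (snd p)) - fst p))"
        by (rule continuous_on_compose2[OF continuous_on_csqrt])
          (use notnp in \<open>auto intro!: continuous_intros continuous_on_compose2[OF contB] simp: cbox_interval\<close>)
      have nz: "csqrt (of_real (B (snd p)) - fst p) \<noteq> 0" if "p \<in> ball 0 d \<times> cbox a b" for p
        using notnp[of "snd p" "fst p"] that by (auto simp: cbox_interval)
      show "continuous_on (ball 0 d \<times> cbox a b) (\<lambda>(x, t). fx x t)"
        unfolding fx_def split_beta
        by (intro continuous_intros c1) (use nz in auto)
    qed (use z0 in auto)
    then show "(\<lambda>z. integral {a..b} (\<lambda>x. csqrt (of_real (B x) - z))) field_differentiable at z0 within ball 0 d"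
      unfolding field_differentiable_def by (auto simp: cbox_interval)
  qed
qed



context ks begin

lemma ident_R:
  fixes h \<phi> :: "complex \<Rightarrow> complex"
  assumes r: "r > 0" and inj: "inj_on h (ball (of_real Xp) r)"
    and hA: "\<And>x. x \<in> {Xm..Xp} \<Longrightarrow> h (of_real x) = of_real ((A x)\<^sup>2)"
    and ph: "\<And>y. y \<in> ball 0 e \<Longrightarrow> \<phi> y \<in> ball (of_real Xp) r \<and> h (\<phi> y) = y"
  obtains Y where "Y > 0" "Y < (A x0)\<^sup>2"
    "\<And>y. 0 < y \<Longrightarrow> y < e \<Longrightarrow> y < Y \<Longrightarrow> \<phi> (of_real y) = of_real (xplus A (sqrt y))"
proof -
  define r' where "r' = min r (Xp - x0) / 2"
  define q where "q = Xp - r'"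
  have r'p: "0 < r'" "r' < r" "r' < Xp - x0" using r x0 unfolding r'_def by auto
  have q: "x0 < q" "q < Xp" using r'p unfolding q_def by auto
  have Aq: "0 < A q" "A q < A x0" using pos[of q] mx[of q] q x0 by auto
  show ?thesis
  proof (rule that[of "(A q)\<^sup>2"])
    show "0 < (A q)\<^sup>2" using Aq by simp
    show "(A q)\<^sup>2 < (A x0)\<^sup>2" using Aq by (intro power_strict_mono) auto
    fix y :: real assume y: "0 < y" "y < e" "y < (A q)\<^sup>2"
    define s where "s = sqrt y"
    have s: "0 < s" "s < A q" unfolding s_def using y Aq
      by (auto simp: real_sqrt_less_iff intro!: real_less_lsqrt)
    have sA: "s < A x0" using s Aq by simp
    have xp: "A (xplus A s) = s" "xplus A s \<in> {x0<..<Xp}" using lev(2,4)[OF s(1) sA] by auto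
    have "\<not> xplus A s < q" using lev(6)[OF s(1) sA, of q] s by auto
    moreover have "xplus A s \<noteq> q" using xp s by auto
    ultimately have "q < xplus A s" by simp
    then have db: "of_real (xplus A s) \<in> ball (of_real Xp :: complex) r"
      using xp r'p unfolding q_def by (auto simp: dist_norm simp flip: of_real_diff)
    have "h (of_real (xplus A s)) = of_real (s\<^sup>2)" using hA[of "xplus A s"] xp x0 by auto
    also have "s\<^sup>2 = y" unfolding s_def using y by simp
    finally have h1: "h (of_real (xplus A s)) = of_real y" .
    have yb: "(of_real y :: complex) \<in> ball 0 e" using y by simp
    have "\<phi> (of_real y) = of_real (xplus A s)"
      using inj_onD[OF inj, of "\<phi> (of_real y)" "of_real (xplus A s)"] ph[OF yb] h1 db by auto
    then show "\<phi> (of_real y) = of_real (xplus A (sqrt y))" unfolding s_def .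
  qed
qed

lemma ident_L:
  fixes h \<phi> :: "complex \<Rightarrow> complex"
  assumes r: "r > 0" and inj: "inj_on h (ball (of_real Xm) r)"
    and hA: "\<And>x. x \<in> {Xm..Xp} \<Longrightarrow> h (of_real x) = of_real ((A x)\<^sup>2)"
    and ph: "\<And>y. y \<in> ball 0 e \<Longrightarrow> \<phi> y \<in> ball (of_real Xm) r \<and> h (\<phi> y) = y"
  obtains Y where "Y > 0" "Y < (A x0)\<^sup>2"
    "\<And>y. 0 < y \<Longrightarrow> y < e \<Longrightarrow> y < Y \<Longrightarrow> \<phi> (of_real y) = of_real (xminus A (sqrt y))"
proof -
  define r' where "r' = min r (x0 - Xm) / 2"
  define q where "q = Xm + r'"
  have r'p: "0 < r'" "r' < r" "r' < x0 - Xm" using r x0 unfolding r'_def by auto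
  have q: "Xm < q" "q < x0" using r'p unfolding q_def by auto
  have Aq: "0 < A q" "A q < A x0" using pos[of q] mx[of q] q x0 by auto
  show ?thesis
  proof (rule that[of "(A q)\<^sup>2"])
    show "0 < (A q)\<^sup>2" using Aq by simp
    show "(A q)\<^sup>2 < (A x0)\<^sup>2" using Aq by (intro power_strict_mono) auto
    fix y :: real assume y: "0 < y" "y < e" "y < (A q)\<^sup>2"
    define s where "s = sqrt y"
    have s: "0 < s" "s < A q" unfolding s_def using y Aq
      by (auto simp: real_sqrt_less_iff intro!: real_less_lsqrt)
    have sA: "s < A x0" using s Aq by simp
    have xp: "A (xminus A s) = s" "xminus A s \<in> {Xm<..<x0}" using lev(1,3)[OF s(1) sA] by auto
    have "\<not> q < xminus A s" using lev(6)[OF s(1) sA, of q] s by auto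
    moreover have "xminus A s \<noteq> q" using xp s by auto
    ultimately have "xminus A s < q" by simp
    then have db: "of_real (xminus A s) \<in> ball (of_real Xm :: complex) r"
      using xp r'p unfolding q_def by (auto simp: dist_norm simp flip: of_real_diff)
    have "h (of_real (xminus A s)) = of_real (s\<^sup>2)" using hA[of "xminus A s"] xp x0 by auto
    also have "s\<^sup>2 = y" unfolding s_def using y by simp
    finally have h1: "h (of_real (xminus A s)) = of_real y" .
    have yb: "(of_real y :: complex) \<in> ball 0 e" using y by simp
    have "\<phi> (of_real y) = of_real (xminus A s)"
      using inj_onD[OF inj, of "\<phi> (of_real y)" "of_real (xminus A s)"] ph[OF yb] h1 db by auto
    then show "\<phi> (of_real y) = of_real (xminus A (sqrt y))" unfolding s_def .
  qed
qed

end



theorem proposition1: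
  fixes A :: "real \<Rightarrow> real" and Xm Xp :: real
  assumes "semicircular_KS A Xm Xp"
  shows "(\<forall>s. 0 < s \<and> s < Amax A \<longrightarrow> Phi A s > 0) \<and>
         (Phi A \<longlongrightarrow> 0) (at_left (Amax A)) \<and>
         (\<exists>r>0. \<exists>c :: nat \<Rightarrow> real.
            (\<forall>z\<in>ball (0::complex) r. summable (\<lambda>k. complex_of_real (c k) * z ^ (2 * k))) \<and>
            (\<forall>s. 0 < s \<and> s < r \<and> s < Amax A \<longrightarrow>
               (\<lambda>k. complex_of_real (c k) * (\<i> * complex_of_real s) ^ (2 * k))
                 sums complex_of_real (Phi A s)) \<and>
            c 0 > 0 \<and> c 1 > 0)"
proof -
  note KS = assms[unfolded semicircular_KS_def]
  have lt: "Xm < Xp" and clos: "closure {x. A x \<noteq> 0} = {Xm..Xp}"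
    and contA: "continuous_on UNIV A" using KS by auto
  obtain u c U g x0 where c: "c > 0"
    and uA': "\<forall>x\<in>{Xm..Xp}. c \<le> u x \<and> A x = u x * sqrt ((Xp - x) * (x - Xm))"
    and U: "open U" "complex_of_real ` {Xm..Xp} \<subseteq> U" and holg: "g holomorphic_on U"
    and gu': "\<forall>x\<in>{Xm..Xp}. g (complex_of_real x) = complex_of_real (u x)"
    and mx': "\<forall>x. x \<noteq> x0 \<longrightarrow> A x < A x0"
    and crd0': "\<forall>s. 0 < s \<and> s < Amax A \<longrightarrow> card {x. A x = s} = 2"
    using KS by (elim conjE exE) blast
  have uA: "\<And>x. x \<in> {Xm..Xp} \<Longrightarrow> c \<le> u x \<and> A x = u x * sqrt ((Xp - x) * (x - Xm))"
    using uA' by blast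
  have gu: "\<And>x. x \<in> {Xm..Xp} \<Longrightarrow> g (complex_of_real x) = complex_of_real (u x)" using gu' by blast
  have mx: "\<And>x. x \<noteq> x0 \<Longrightarrow> A x < A x0" using mx' by blast
  have crd0: "\<And>s. 0 < s \<Longrightarrow> s < Amax A \<Longrightarrow> card {x. A x = s} = 2" using crd0' by blast
  have out: "A x = 0" if "x \<notin> {Xm<..<Xp}" for x
  proof (cases "x \<in> {Xm..Xp}")
    case True
    then have "x = Xm \<or> x = Xp" using that by auto
    then have "(Xp - x) * (x - Xm) = 0" by auto
    then show ?thesis using uA[OF True] by simp
  next
    case False
    have "{x. A x \<noteq> 0} \<subseteq> {Xm..Xp}" using closure_subset[of "{x. A x \<noteq> 0}"] unfolding clos .
    then show ?thesis using False by auto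
  qed
  have pos: "A x > 0" if "x \<in> {Xm<..<Xp}" for x
  proof -
    have "0 < (Xp - x) * (x - Xm)" using that by (intro mult_pos_pos) auto
    then have "0 < sqrt ((Xp - x) * (x - Xm))" by simp
    moreover have "0 < u x" using uA[of x] that c by auto
    ultimately have "0 < u x * sqrt ((Xp - x) * (x - Xm))" by (rule mult_pos_pos[rotated])
    then show ?thesis using uA[of x] that by simp
  qed
  have AmaxE: "Amax A = A x0"
    unfolding Amax_def
  proof (rule cSup_eq_maximum)
    show "A x0 \<in> range A" by simp
    fix y assume "y \<in> range A" then show "y \<le> A x0" using mx by (auto, metis less_imp_le mx order_refl)
  qed
  have x0: "x0 \<in> {Xm<..<Xp}"
  proof -
    define m where "m = (Xm + Xp) / 2"
    have "A m > 0" using pos[of m] lt unfolding m_def by auto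
    then have "A x0 > 0" using mx[of m] by (cases "x0 = m") auto
    then show ?thesis using out by force
  qed
  interpret ks A Xm Xp x0
    by unfold_locales (use contA out pos x0 mx crd0 AmaxE in auto)
  have part1: "\<forall>s. 0 < s \<and> s < Amax A \<longrightarrow> Phi A s > 0" using Phi_pos AmaxE by auto
  have part2: "(Phi A \<longlongrightarrow> 0) (at_left (Amax A))" by (rule Phi_lim)
  define h where "h = (\<lambda>z. (g z)\<^sup>2 * (of_real Xp - z) * (z - of_real Xm))"
  have holh: "h holomorphic_on U" unfolding h_def by (intro holomorphic_intros holg)
  have hA: "h (of_real x) = of_real ((A x)\<^sup>2)" if "x \<in> {Xm..Xp}" for x
  proof -
    have nn: "0 \<le> (Xp - x) * (x - Xm)" using that by auto
    have "(A x)\<^sup>2 = (u x)\<^sup>2 * ((Xp - x) * (x - Xm))"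
      using uA[OF that] nn by (simp add: power_mult_distrib)
    then show ?thesis unfolding h_def using gu[OF that] by simp
  qed
  have XpU: "of_real Xp \<in> U" "of_real Xm \<in> U" using U lt by auto
  have gd: "(g has_field_derivative deriv g z) (at z)" if "z \<in> U" for z
    using holg U(1) that holomorphic_derivI by blast
  have hd: "(h has_field_derivative (2 * g z * deriv g z * (of_real Xp - z) * (z - of_real Xm)
      + (g z)\<^sup>2 * ((of_real Xp - z) - (z - of_real Xm)))) (at z)" if "z \<in> U" for z
    unfolding h_def by (auto intro!: derivative_eq_intros gd[OF that] simp: algebra_simps)
  have dR: "deriv h (of_real Xp) \<noteq> 0"
  proof -
    have "deriv h (of_real Xp) = (g (of_real Xp))\<^sup>2 * (of_real Xp - of_real Xm) * (-1)"
      using DERIV_imp_deriv[OF hd[OF XpU(1)]] by (simp add: algebra_simps)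
    moreover have "g (of_real Xp) \<noteq> 0" using gu[of Xp] uA[of Xp] c lt by auto
    ultimately show ?thesis using lt by simp
  qed
  have dL: "deriv h (of_real Xm) \<noteq> 0"
  proof -
    have "deriv h (of_real Xm) = (g (of_real Xm))\<^sup>2 * (of_real Xp - of_real Xm)"
      using DERIV_imp_deriv[OF hd[OF XpU(2)]] by (simp add: algebra_simps)
    moreover have "g (of_real Xm) \<noteq> 0" using gu[of Xm] uA[of Xm] c lt by auto
    ultimately show ?thesis using lt by simp
  qed
  have h0: "h (of_real Xp) = 0" "h (of_real Xm) = 0" unfolding h_def by simp_all
  obtain rR eR \<phi>R where R: "rR > 0" "eR > 0" "inj_on h (ball (of_real Xp) rR)"
    "\<phi>R holomorphic_on ball 0 eR"
    "\<And>y. y \<in> ball 0 eR \<Longrightarrow> \<phi>R y \<in> ball (of_real Xp) rR \<and> h (\<phi>R y) = y"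
    using local_inverse[OF holh U(1) XpU(1) dR] h0 by metis
  obtain rL eL \<phi>L where L: "rL > 0" "eL > 0" "inj_on h (ball (of_real Xm) rL)"
    "\<phi>L holomorphic_on ball 0 eL"
    "\<And>y. y \<in> ball 0 eL \<Longrightarrow> \<phi>L y \<in> ball (of_real Xm) rL \<and> h (\<phi>L y) = y"
    using local_inverse[OF holh U(1) XpU(2) dL] h0 by metis
  obtain YR where YR: "YR > 0" "YR < (A x0)\<^sup>2"
    "\<And>y. 0 < y \<Longrightarrow> y < eR \<Longrightarrow> y < YR \<Longrightarrow> \<phi>R (of_real y) = of_real (xplus A (sqrt y))"
    using ident_R[OF R(1) R(3) hA R(5)] by metis
  obtain YL where YL: "YL > 0" "YL < (A x0)\<^sup>2"
    "\<And>y. 0 < y \<Longrightarrow> y < eL \<Longrightarrow> y < YL \<Longrightarrow> \<phi>L (of_real y) = of_real (xminus A (sqrt y))"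
    using ident_L[OF L(1) L(3) hA L(5)] by metis
  define HR where "HR = min eR YR / 2"
  define HL where "HL = min eL YL / 2"
  have HR: "0 < HR" "HR < eR" "HR < YR" using R YR unfolding HR_def by auto
  have HL: "0 < HL" "HL < eL" "HL < YL" using L YL unfolding HL_def by auto
  define \<rho> where "\<rho> = min HL HR"
  have \<rho>: "0 < \<rho>" "\<rho> \<le> HL" "\<rho> \<le> HR" "\<rho> < (A x0)\<^sup>2" using HR HL YR YL unfolding \<rho>_def by auto
  define a where "a = xminus A (sqrt HL)"
  define b where "b = xplus A (sqrt HR)"
  have sHL: "0 < sqrt HL" "sqrt HL < A x0" using HL YL x0 pos[of x0]
    by (auto simp: real_sqrt_less_iff intro!: real_less_lsqrt)
  have sHR: "0 < sqrt HR" "sqrt HR < A x0" using HR YR x0 pos[of x0]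
    by (auto simp: real_sqrt_less_iff intro!: real_less_lsqrt)
  have ab: "a < x0" "x0 < b" using lev(1)[OF sHL] lev(2)[OF sHR] unfolding a_def b_def by auto
  have Aab: "\<rho> \<le> (A x)\<^sup>2" if "x \<in> {a..b}" for x
  proof -
    define s1 where "s1 = sqrt \<rho>"
    have s1: "0 < s1" "s1 \<le> sqrt HL" "s1 \<le> sqrt HR" unfolding s1_def using \<rho> sHL sHR by auto
    then have s1': "s1 < A x0" using sHL by linarith
    note s1 = s1 s1'
    have "xminus A s1 \<le> a"
      using lev_mono(1)[of s1 "sqrt HL"] s1 sHL unfolding a_def by (cases "s1 = sqrt HL") auto
    moreover have "b \<le> xplus A s1"
      using lev_mono(2)[of s1 "sqrt HR"] s1 sHR unfolding b_def by (cases "s1 = sqrt HR") auto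
    ultimately have "s1 \<le> A x" using lev_ge[of s1 x] s1 that by auto
    then have "s1\<^sup>2 \<le> (A x)\<^sup>2" using s1 by (intro power_mono) auto
    then show ?thesis unfolding s1_def using \<rho> by simp
  qed
  define IL where "IL = (\<lambda>z. integral {0..1} (\<lambda>\<sigma>::real. of_real (sqrt \<sigma>) * deriv \<phi>L (z + (of_real HL - z) * of_real \<sigma>)))"
  define IR where "IR = (\<lambda>z. integral {0..1} (\<lambda>\<sigma>::real. of_real (sqrt \<sigma>) * deriv \<phi>R (z + (of_real HR - z) * of_real \<sigma>)))"
  define Mc where "Mc = (\<lambda>z. integral {a..b} (\<lambda>x. csqrt (of_real ((A x)\<^sup>2) - z)))"
  define G where "G = (\<lambda>z. (of_real HL - z) * csqrt (of_real HL - z) * IL z + Mc z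
                          - (of_real HR - z) * csqrt (of_real HR - z) * IR z)"
  have holG: "G holomorphic_on ball 0 \<rho>"
  proof -
    have "IL holomorphic_on ball 0 eL" unfolding IL_def by (rule endpoint_holo[OF L(4) HL(1,2)])
    then have i1: "IL holomorphic_on ball 0 \<rho>" by (rule holomorphic_on_subset) (use \<rho> HL in auto)
    have "IR holomorphic_on ball 0 eR" unfolding IR_def by (rule endpoint_holo[OF R(4) HR(1,2)])
    then have i2: "IR holomorphic_on ball 0 \<rho>" by (rule holomorphic_on_subset) (use \<rho> HR in auto)
    have i3: "Mc holomorphic_on ball 0 \<rho>" unfolding Mc_def
      by (rule middle_holo) (use Aab in \<open>auto intro!: continuous_intros continuous_on_subset[OF contA]\<close>)
    have np: "of_real H - z \<notin> \<real>\<^sub>\<le>\<^sub>0" if "z \<in> ball 0 \<rho>" "\<rho> \<le> H" for z :: complex and H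
    proof -
      have "Re z \<le> norm z" by (rule complex_Re_le_cmod)
      then have "Re z < H" using that by auto
      then show ?thesis by (auto simp: complex_nonpos_Reals_iff)
    qed
    show ?thesis unfolding G_def
      by (intro holomorphic_intros i1 i2 i3) (use np \<rho> in auto)
  qed
  have ReG: "Re (G (of_real (s\<^sup>2))) = Phi A s" if s: "0 < s" "s\<^sup>2 < \<rho>" for s
  proof -
    define t where "t = s\<^sup>2"
    have t: "0 < t" "t < HL" "t < HR" "t < \<rho>" using s \<rho> unfolding t_def by auto
    have sqt: "sqrt t = s" unfolding t_def using s by simp
    have sl: "s < sqrt HL" "s < sqrt HR" using t sqt by (auto simp: real_sqrt_less_iff simp flip: sqt)
    have sA: "s < A x0" using sl sHL by simp
    define f where "f = (\<lambda>x. sqrt ((A x)\<^sup>2 - t))"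
    have intf: "f integrable_on {p..q}" for p q unfolding f_def
      by (intro integrable_continuous_interval continuous_intros continuous_on_subset[OF contA]) auto
    have xa: "xminus A s < a" using lev_mono(1)[OF s(1) sl(1) sHL(2)] unfolding a_def .
    have xb: "b < xplus A s" using lev_mono(2)[OF s(1) sl(2) sHR(2)] unfolding b_def .
    have PhiS: "Phi A s = integral {xminus A s..a} f + integral {a..b} f + integral {b..xplus A s} f"
    proof -
      have "Phi A s = integral {xminus A s..xplus A s} f" unfolding Phi_def f_def t_def ..
      also have "\<dots> = integral {xminus A s..a} f + integral {a..xplus A s} f"
        using Henstock_Kurzweil_Integration.integral_combine[where a="xminus A s" and c=a and b="xplus A s" and f=f] intf xa xb ab by auto
      also have "integral {a..xplus A s} f = integral {a..b} f + integral {b..xplus A s} f"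
        using Henstock_Kurzweil_Integration.integral_combine[where a=a and c=b and b="xplus A s" and f=f] intf xa xb ab by auto
      finally show ?thesis by simp
    qed
    have idL: "(A (Re (\<phi>L (of_real y))))\<^sup>2 = y \<and> Re (\<phi>L (of_real y)) = xminus A (sqrt y)"
      if "t \<le> y" "y \<le> HL" for y
    proof -
      have y: "0 < y" "y < eL" "y < YL" using that t HL by auto
      have sy: "0 < sqrt y" "sqrt y < A x0" using y YL pos[OF x0] by (auto simp: real_sqrt_less_iff intro!: real_less_lsqrt)
      show ?thesis using YL(3)[OF y] lev(3)[OF sy] y by simp
    qed
    have EL: "integral {Re (\<phi>L (of_real t))..Re (\<phi>L (of_real HL))} f
       - integral {Re (\<phi>L (of_real HL))..Re (\<phi>L (of_real t))} f
     = (HL - t) * sqrt (HL - t) * integral {0..1} (\<lambda>\<sigma>. sqrt \<sigma> *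
          Re (deriv \<phi>L (of_real t + (of_real HL - of_real t) * of_real \<sigma>)))"
      unfolding f_def by (rule endpoint_subst[OF L(4) t(1,2) HL(2)]) (use idL contA in blast)+
    have reL1: "Re (\<phi>L (of_real t)) = xminus A s" using idL[of t] t sqt by simp
    have reL2: "Re (\<phi>L (of_real HL)) = a" using idL[of HL] t unfolding a_def by simp
    have pieceL: "integral {xminus A s..a} f = (HL - t) * sqrt (HL - t) * integral {0..1} (\<lambda>\<sigma>. sqrt \<sigma> *
          Re (deriv \<phi>L (of_real t + (of_real HL - of_real t) * of_real \<sigma>)))"
      using EL xa unfolding reL1 reL2 by simp
    have idR: "(A (Re (\<phi>R (of_real y))))\<^sup>2 = y \<and> Re (\<phi>R (of_real y)) = xplus A (sqrt y)"
      if "t \<le> y" "y \<le> HR" for y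
    proof -
      have y: "0 < y" "y < eR" "y < YR" using that t HR by auto
      have sy: "0 < sqrt y" "sqrt y < A x0" using y YR pos[OF x0] by (auto simp: real_sqrt_less_iff intro!: real_less_lsqrt)
      show ?thesis using YR(3)[OF y] lev(4)[OF sy] y by simp
    qed
    have ER: "integral {Re (\<phi>R (of_real t))..Re (\<phi>R (of_real HR))} f
       - integral {Re (\<phi>R (of_real HR))..Re (\<phi>R (of_real t))} f
     = (HR - t) * sqrt (HR - t) * integral {0..1} (\<lambda>\<sigma>. sqrt \<sigma> *
          Re (deriv \<phi>R (of_real t + (of_real HR - of_real t) * of_real \<sigma>)))"
      unfolding f_def by (rule endpoint_subst[OF R(4) t(1,3) HR(2)]) (use idR contA in blast)+
    have reR1: "Re (\<phi>R (of_real t)) = xplus A s" using idR[of t] t sqt by simp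
    have reR2: "Re (\<phi>R (of_real HR)) = b" using idR[of HR] t unfolding b_def by simp
    have pieceR: "integral {b..xplus A s} f = - ((HR - t) * sqrt (HR - t) * integral {0..1} (\<lambda>\<sigma>. sqrt \<sigma> *
          Re (deriv \<phi>R (of_real t + (of_real HR - of_real t) * of_real \<sigma>))))"
      using ER xb unfolding reR1 reR2 by simp
    have ReI: "Re (integral {0..1} (\<lambda>\<sigma>::real. of_real (sqrt \<sigma>) * deriv \<phi> (of_real t + (of_real H - of_real t) * of_real \<sigma>)))
        = integral {0..1} (\<lambda>\<sigma>. sqrt \<sigma> * Re (deriv \<phi> (of_real t + (of_real H - of_real t) * of_real \<sigma>)))"
      if hol: "\<phi> holomorphic_on ball 0 e" and He: "0 < H" "H < e" "t < H" for \<phi> :: "complex \<Rightarrow> complex" and H e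
    proof -
      have hd: "deriv \<phi> holomorphic_on ball 0 e" using hol holomorphic_deriv by blast
      have "continuous_on {0..1} (\<lambda>\<sigma>::real. of_real (sqrt \<sigma>) * deriv \<phi> (of_real t + (of_real H - of_real t) * of_real \<sigma>))"
      proof (intro continuous_intros)
        show "continuous_on {0..1} (\<lambda>\<sigma>::real. deriv \<phi> (of_real t + (of_real H - of_real t) * of_real \<sigma>))"
          by (rule continuous_on_compose2[OF holomorphic_on_imp_continuous_on[OF hd]])
             (use t He in \<open>auto intro!: continuous_intros seg_in_ball\<close>)
      qed
      then have "(\<lambda>\<sigma>::real. of_real (sqrt \<sigma>) * deriv \<phi> (of_real t + (of_real H - of_real t) * of_real \<sigma>)) integrable_on {0..1}"
        by (rule integrable_continuous_interval)
      from Re_integral[OF this] show ?thesis by simp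
    qed
    have ReM: "Re (Mc (of_real t)) = integral {a..b} f"
    proof -
      have npt: "(of_real ((A x)\<^sup>2) - of_real t :: complex) \<notin> \<real>\<^sub>\<le>\<^sub>0" if "x \<in> {a..b}" for x
      proof -
        have "t < (A x)\<^sup>2" using Aab[OF that] t by linarith
        then show ?thesis by (simp add: complex_nonpos_Reals_iff flip: of_real_diff of_real_power)
      qed
      have "continuous_on {a..b} (\<lambda>x. csqrt (of_real ((A x)\<^sup>2) - of_real t))"
        by (rule continuous_on_compose2[OF continuous_on_csqrt])
           (use npt in \<open>auto intro!: continuous_intros continuous_on_subset[OF contA]\<close>)
      then have "(\<lambda>x. csqrt (of_real ((A x)\<^sup>2) - of_real t)) integrable_on {a..b}"
        by (rule integrable_continuous_interval)
      from Re_integral[OF this] have "Re (Mc (of_real t)) = integral {a..b} (\<lambda>x. Re (csqrt (of_real ((A x)\<^sup>2) - of_real t)))"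
        unfolding Mc_def .
      also have "\<dots> = integral {a..b} f"
      proof (rule integral_cong)
        fix x assume "x \<in> {a..b}"
        then have "t \<le> (A x)\<^sup>2" using Aab[of x] t \<rho> by auto
        then show "Re (csqrt (of_real ((A x)\<^sup>2) - of_real t)) = f x" unfolding f_def
          by (simp flip: of_real_diff)
      qed
      finally show ?thesis .
    qed
    have cs: "csqrt (of_real H - of_real t) = of_real (sqrt (H - t))" if "t < H" for H
      using that by (simp flip: of_real_diff)
    have "Re (G (of_real t)) = (HL - t) * sqrt (HL - t) * Re (IL (of_real t)) + Re (Mc (of_real t))
        - (HR - t) * sqrt (HR - t) * Re (IR (of_real t))"
      unfolding G_def using cs[OF t(2)] cs[OF t(3)] by (simp flip: of_real_diff of_real_mult)
    also have "\<dots> = Phi A s"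
      unfolding PhiS pieceL pieceR ReM IL_def IR_def
      using ReI[OF L(4) HL(1,2) t(2)] ReI[OF R(4) HR(1,2) t(3)] by simp
    finally show ?thesis unfolding t_def .
  qed
  have G0: "0 \<in> ball (0::complex) \<rho>" using \<rho> by simp
  have hol0: "(G has_field_derivative deriv G 0) (at 0)"
    using holomorphic_derivI[OF holG open_ball G0] by blast
  have contG0: "isCont G 0" using DERIV_isCont[OF hol0] .
  define an where "an = (\<lambda>n. (deriv ^^ n) G 0 / fact n)"
  have ps: "(\<lambda>n. an n * w ^ n) sums G w" if "w \<in> ball 0 \<rho>" for w
    using holomorphic_power_series[OF holG that] by (simp add: an_def)
  define c where "c = (\<lambda>n. (-1) ^ n * Re (an n))"
  define r where "r = sqrt \<rho>"
  have r: "0 < r" "r\<^sup>2 = \<rho>" "r < A x0" unfolding r_def using \<rho> pos[OF x0]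
    by (auto simp: real_sqrt_less_iff intro!: real_less_lsqrt)
  define s0 where "s0 = r / 2"
  have s0: "0 < s0" "s0 < r" "s0 < A x0" using r unfolding s0_def by auto
  define \<kappa> where "\<kappa> = (xplus A s0 - xminus A s0) / (2 * A x0)"
  have \<kappa>: "0 < \<kappa>" unfolding \<kappa>_def using lev(1,2)[OF s0(1,3)] pos[OF x0] by auto
  have sr: "s\<^sup>2 < \<rho>" if "0 < s" "s < r" for s
  proof -
    have "s\<^sup>2 < r\<^sup>2" using that by (intro power_strict_mono) auto
    then show ?thesis using r by simp
  qed
  have limG: "((\<lambda>s. Re (G (of_real (s\<^sup>2)))) \<longlongrightarrow> Re (G 0)) (at_right 0)"
  proof -
    have "((\<lambda>s::real. (of_real (s\<^sup>2) :: complex)) \<longlongrightarrow> of_real (0\<^sup>2)) (at_right 0)"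
      by (intro tendsto_intros)
    then have "((\<lambda>s::real. (of_real (s\<^sup>2) :: complex)) \<longlongrightarrow> 0) (at_right 0)" by simp
    from isCont_tendsto_compose[OF contG0 this]
    show ?thesis by (intro tendsto_Re)
  qed
  have P1: "Phi A s \<le> Re (G 0) - s\<^sup>2 * \<kappa>" if s: "0 < s" "s < s0" for s
  proof -
    have "((\<lambda>s'. Re (G (of_real (s'\<^sup>2))) - (s\<^sup>2 - s'\<^sup>2) * \<kappa>) \<longlongrightarrow> Re (G 0) - (s\<^sup>2 - 0\<^sup>2) * \<kappa>) (at_right 0)"
      by (intro tendsto_intros limG)
    then have lim: "((\<lambda>s'. Re (G (of_real (s'\<^sup>2))) - (s\<^sup>2 - s'\<^sup>2) * \<kappa>) \<longlongrightarrow> Re (G 0) - s\<^sup>2 * \<kappa>) (at_right 0)"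
      by simp
    have ev: "eventually (\<lambda>s'. Phi A s \<le> Re (G (of_real (s'\<^sup>2))) - (s\<^sup>2 - s'\<^sup>2) * \<kappa>) (at_right 0)"
    proof -
      have "eventually (\<lambda>s'. 0 < s' \<and> s' < s) (at_right (0::real))"
        using eventually_at_right_real[OF s(1)] by (auto elim: eventually_mono)
      then show ?thesis
      proof (rule eventually_mono)
        fix s' assume s': "0 < s' \<and> s' < s"
        have "Phi A s \<le> Phi A s' - (s\<^sup>2 - s'\<^sup>2) * \<kappa>"
          unfolding \<kappa>_def using Phi_decr[of s' s s0] s' s s0 by auto
        moreover have "Re (G (of_real (s'\<^sup>2))) = Phi A s'" using ReG[of s'] sr[of s'] s' s s0 by auto
        ultimately show "Phi A s \<le> Re (G (of_real (s'\<^sup>2))) - (s\<^sup>2 - s'\<^sup>2) * \<kappa>" by simp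
      qed
    qed
    show ?thesis by (rule tendsto_lowerbound[OF lim ev]) simp
  qed
  have c0: "c 0 > 0"
  proof -
    have "Phi A (s0 / 2) \<le> Re (G 0) - (s0 / 2)\<^sup>2 * \<kappa>" using P1[of "s0 / 2"] s0 by auto
    moreover have "Phi A (s0 / 2) > 0" using Phi_pos[of "s0 / 2"] s0 by auto
    moreover have "(s0 / 2)\<^sup>2 * \<kappa> > 0" using s0 \<kappa> by auto
    ultimately have "Re (G 0) > 0" by linarith
    then show ?thesis unfolding c_def an_def by simp
  qed
  have c1: "c 1 > 0"
  proof -
    have d: "((\<lambda>w. (G w - G 0) / (w - 0)) \<longlongrightarrow> deriv G 0) (at 0)"
      using hol0 unfolding has_field_derivative_iff by simp
    have fl: "filterlim (\<lambda>s::real. (of_real (s\<^sup>2) :: complex)) (at 0) (at_right 0)"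
    proof (rule filterlim_atI)
      have "((\<lambda>s::real. (of_real (s\<^sup>2) :: complex)) \<longlongrightarrow> of_real (0\<^sup>2)) (at_right 0)"
        by (intro tendsto_intros)
      then show "((\<lambda>s::real. (of_real (s\<^sup>2) :: complex)) \<longlongrightarrow> 0) (at_right 0)" by simp
      show "eventually (\<lambda>s::real. (of_real (s\<^sup>2) :: complex) \<noteq> 0) (at_right 0)"
        using eventually_at_right_real[of 0 1] by (auto elim: eventually_mono)
    qed
    have "((\<lambda>s. Re ((G (of_real (s\<^sup>2)) - G 0) / (of_real (s\<^sup>2) - 0))) \<longlongrightarrow> Re (deriv G 0)) (at_right 0)"
      by (intro tendsto_Re filterlim_compose[OF d fl])
    moreover have "eventually (\<lambda>s. Re ((G (of_real (s\<^sup>2)) - G 0) / (of_real (s\<^sup>2) - 0)) \<le> - \<kappa>) (at_right 0)"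
    proof -
      have "eventually (\<lambda>s'. 0 < s' \<and> s' < s0) (at_right (0::real))"
        using eventually_at_right_real[OF s0(1)] by (auto elim: eventually_mono)
      then show ?thesis
      proof (rule eventually_mono)
        fix s assume s: "0 < s \<and> s < s0"
        have e1: "Re ((G (of_real (s\<^sup>2)) - G 0) / (of_real (s\<^sup>2) - 0)) = (Phi A s - Re (G 0)) / s\<^sup>2"
          using ReG[of s] sr[of s] s s0 by (simp add: Re_divide_of_real flip: of_real_power)
        have "Phi A s - Re (G 0) \<le> - \<kappa> * s\<^sup>2" using P1[of s] s by (simp add: algebra_simps)
        then have "(Phi A s - Re (G 0)) / s\<^sup>2 \<le> - \<kappa>" using s by (simp add: divide_le_eq)
        then show "Re ((G (of_real (s\<^sup>2)) - G 0) / (of_real (s\<^sup>2) - 0)) \<le> - \<kappa>" unfolding e1 .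
      qed
    qed
    ultimately have "Re (deriv G 0) \<le> - \<kappa>" by (rule tendsto_upperbound) simp
    then show ?thesis unfolding c_def an_def using \<kappa> by simp
  qed
  have summ: "summable (\<lambda>k. complex_of_real (c k) * z ^ (2 * k))" if z: "z \<in> ball (0::complex) r" for z
  proof -
    define w where "w = - (z\<^sup>2)"
    have nw: "norm w < \<rho>"
    proof -
      have "norm z < r" using z by simp
      then have "(norm z)\<^sup>2 < r\<^sup>2" by (intro power_strict_mono) auto
      then show ?thesis unfolding w_def using r by (simp add: norm_power)
    qed
    define x where "x = (norm w + \<rho>) / 2"
    have nn: "0 \<le> norm w" by (rule norm_ge_zero)
    have x1: "norm w < x" unfolding x_def using nw by auto
    have x2: "x < \<rho>" unfolding x_def using nw by auto
    have x3: "0 \<le> x" unfolding x_def by (intro divide_nonneg_pos add_nonneg_nonneg) (use \<rho> in auto)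
    note x = x1 x2 x3
    have "(\<lambda>n. an n * (of_real x) ^ n) sums G (of_real x)" using ps[of "of_real x"] x by simp
    then have "summable (\<lambda>n. Re (an n * (of_real x) ^ n))" by (intro summable_Re) (auto simp: sums_iff)
    then have "summable (\<lambda>n. Re (an n) * x ^ n)" by (simp flip: of_real_power)
    then have "summable (\<lambda>n. complex_of_real (Re (an n) * x ^ n))" by (simp only: summable_complex_of_real)
    then have "summable (\<lambda>n. complex_of_real (Re (an n)) * (of_real x) ^ n)" by (simp only: of_real_mult of_real_power)
    from powser_inside[OF this, of w] x
    have "summable (\<lambda>n. complex_of_real (Re (an n)) * w ^ n)" by simp
    moreover have "complex_of_real (c k) * z ^ (2 * k) = complex_of_real (Re (an k)) * w ^ k" for k
      unfolding c_def w_def by (simp add: power_mult power_minus')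
    ultimately show ?thesis by simp
  qed
  have sumP: "(\<lambda>k. complex_of_real (c k) * (\<i> * complex_of_real s) ^ (2 * k)) sums complex_of_real (Phi A s)"
    if s: "0 < s" "s < r" for s
  proof -
    have t: "s\<^sup>2 < \<rho>" using sr s by blast
    have tb: "(of_real (s\<^sup>2) :: complex) \<in> ball 0 \<rho>"
      using t s by (simp only: mem_ball_0 norm_of_real) simp
    have "(\<lambda>n. an n * (of_real (s\<^sup>2)) ^ n) sums G (of_real (s\<^sup>2))" by (rule ps[OF tb])
    then have "(\<lambda>n. Re (an n * (of_real (s\<^sup>2)) ^ n)) sums Re (G (of_real (s\<^sup>2)))"
      by (simp add: sums_complex_iff)
    then have "(\<lambda>n. Re (an n) * (s\<^sup>2) ^ n) sums Phi A s" using ReG[OF s(1) t] by (simp flip: of_real_power)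
    then have "(\<lambda>n. complex_of_real (Re (an n) * (s\<^sup>2) ^ n)) sums complex_of_real (Phi A s)"
      by (rule sums_of_real)
    moreover have "complex_of_real (c k) * (\<i> * complex_of_real s) ^ (2 * k) = complex_of_real (Re (an k) * (s\<^sup>2) ^ k)" for k
    proof -
      have "(\<i> * complex_of_real s) ^ (2 * k) = ((\<i> * complex_of_real s)\<^sup>2) ^ k" by (simp add: power_mult)
      also have "(\<i> * complex_of_real s)\<^sup>2 = - of_real (s\<^sup>2)" by (simp add: power_mult_distrib)
      finally have "(\<i> * complex_of_real s) ^ (2 * k) = (-1) ^ k * of_real ((s\<^sup>2) ^ k)"
        by (simp add: power_minus')
      then show ?thesis unfolding c_def by (simp add: power_minus' flip: power_mult)
    qed
    ultimately show ?thesis by simp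
  qed
  show ?thesis
    using part1 part2 summ sumP c0 c1 r(1) by blast
qed


end
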